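(* Let $n\ge 2$ and let $F_{2n}$ be the cubic multigraph obtained from the cycle $C_{2n}$ by adding a parallel edge to every second edge of the cycle. Then the eigenvalues of $F_{2n}$ are $\pm\sqrt{4\cos(2\pi j/n)+5}$ for $j=0,1,\dots,n-1$. Consequently, $1$ is an eigenvalue of $F_{2n}$ if and only if $n$ is even, in which case it is a simple eigenvalue.
   Context: The adjacency matrix of a multigraph has $(x,y)$-entry equal to the number of edges joining $x$ and $y$; eigenvalues are those of this matrix. An eigenvalue is simple if its eigenspace is $1$-dimensional. *)

theory Defs
  imports Complex_Main "Jordan_Normal_Form.Jordan_Normal_Form_Uniqueness"
begin

text \<open>The (x,y)-entry is the number of edges joining x and y.\<close>
definition F_adj :: "nat \<Rightarrow> real mat" where
  "F_adj n = mat (2*n) (2*n) (\<lambda>(i,j).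
     if j = (i + 1) mod (2*n) then (if even i then 2 else 1)
     else if i = (j + 1) mod (2*n) then (if even j then 2 else 1)
     else 0)"

end

theory Submission
  imports Defs "Jordan_Normal_Form.Jordan_Normal_Form_Existence"
begin

definition sc :: "nat \<Rightarrow> nat \<Rightarrow> nat" where "sc n i = (if i + 1 = 2*n then 0 else i+1)"
definition pr :: "nat \<Rightarrow> nat \<Rightarrow> nat" where "pr n i = (if i = 0 then 2*n - 1 else i - 1)"

lemma mod_suc_lt: "i < (N::nat) \<Longrightarrow> (i+1) mod N = (if i + 1 = N then 0 else i + 1)"
  by auto

lemma F_entry:
  assumes n2: "n \<ge> 2" and i: "i < 2*n" and j: "j < 2*n"
  shows "F_adj n $$ (i,j) = (if j = sc n i then (if even i then 2 else 1) else 0)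
     + (if j = pr n i then (if even i then 1 else 2) else 0)"
proof -
  have e: "F_adj n $$ (i,j) = (if j = sc n i then (if even i then 2 else 1)
     else if i = sc n j then (if even j then 2 else 1) else 0)"
  proof -
    have a: "(i+1) mod (2*n) = sc n i" "(j+1) mod (2*n) = sc n j"
      unfolding sc_def using i j by (auto simp: mod_suc_lt simp del: Suc_eq_plus1 One_nat_def)
    have "F_adj n $$ (i,j) = (if j = (i + 1) mod (2*n) then (if even i then 2 else 1)
     else if i = (j + 1) mod (2*n) then (if even j then 2 else 1) else 0)"
      unfolding F_adj_def using i j by (subst index_mat) auto
    then show ?thesis unfolding a .
  qed
  have ne: "sc n i \<noteq> pr n i" unfolding sc_def pr_def using n2 i by auto
  have iff: "i = sc n j \<longleftrightarrow> j = pr n i" unfolding sc_def pr_def using n2 i j by auto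
  have par: "even j \<longleftrightarrow> odd i" if jp: "j = pr n i"
  proof (cases "i = 0")
    case True
    have "j = 2*n - 1" using jp using True unfolding pr_def by simp
    then show ?thesis using True n2 by (simp add: even_diff_nat)
  next
    case False
    have "i = j + 1" using jp using False unfolding pr_def by simp
    then show ?thesis by simp
  qed
  show ?thesis unfolding e iff using ne par by auto
qed

lemma sc_lt: "n \<ge> 2 \<Longrightarrow> i < 2*n \<Longrightarrow> sc n i < 2*n" unfolding sc_def by auto
lemma pr_lt: "n \<ge> 2 \<Longrightarrow> i < 2*n \<Longrightarrow> pr n i < 2*n" unfolding pr_def by auto

lemma F_sum:
  fixes f :: "nat \<Rightarrow> 'a :: real_algebra_1"
  assumes n2: "n \<ge> 2" and i: "i < 2*n"
  shows "(\<Sum>r<2*n. of_real (F_adj n $$ (i,r)) * f r)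
     = (if even i then 2 else 1) * f (sc n i) + (if even i then 1 else 2) * f (pr n i)"
proof -
  have "(\<Sum>r<2*n. of_real (F_adj n $$ (i,r)) * f r)
     = (\<Sum>r<2*n. (if r = sc n i then (if even i then 2 else 1) * f r else 0)
                 + (if r = pr n i then (if even i then 1 else 2) * f r else 0))"
    by (intro sum.cong refl) (auto simp: F_entry[OF n2 i] distrib_right)
  also have "\<dots> = (if even i then 2 else 1) * f (sc n i) + (if even i then 1 else 2) * f (pr n i)"
    using sc_lt[OF n2 i] pr_lt[OF n2 i] by (simp add: sum.distrib)
  finally show ?thesis .
qed


definition om :: "nat \<Rightarrow> complex" where "om n = cis (2*pi / real n)"
definition sq :: "nat \<Rightarrow> nat \<Rightarrow> real" where "sq n j = sqrt (4 * cos (2 * pi * real j / real n) + 5)"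
definition cc :: "nat \<Rightarrow> nat \<Rightarrow> complex" where "cc n j = (2 + om n ^ j) / complex_of_real (sq n j)"

lemma om_pow: "om n ^ m = cis (2*pi*real m / real n)"
  unfolding om_def DeMoivre by (simp add: mult_ac)

lemma om_pow_n: "n > 0 \<Longrightarrow> om n ^ n = 1"
  unfolding om_pow by simp

lemma om_pow_mod: assumes "n > 0" shows "om n ^ m = om n ^ (m mod n)"
proof -
  have "om n ^ m = om n ^ (n * (m div n) + m mod n)" by simp
  also have "\<dots> = (om n ^ n) ^ (m div n) * om n ^ (m mod n)" by (simp only: power_add power_mult)
  finally show ?thesis using om_pow_n[OF assms] by simp
qed

lemma norm_om_pow[simp]: "norm (om n ^ m) = 1"
  unfolding om_pow by simp

lemma cnj_om_mult: "cnj (om n ^ m) * om n ^ m = 1"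
proof -
  have "cnj (om n ^ m) * om n ^ m = complex_of_real ((norm (om n ^ m))^2)"
    by (simp only: complex_norm_square mult.commute)
  then show ?thesis by (simp only: norm_om_pow) simp
qed

lemma om_inj: assumes "j < n" "j' < n" "om n ^ j = om n ^ j'" shows "j = j'"
proof -
  have n: "n > 0" using assms by auto
  from bij_betw_roots_unity[OF n] have "inj_on (\<lambda>k. cis (2 * pi * real k / real n)) {..<n}"
    by (simp add: bij_betw_def)
  then show ?thesis using assms unfolding om_pow inj_on_def by blast
qed

lemma sq_arg_ge: "4 * cos x + 5 \<ge> (1::real)"
  using cos_ge_minus_one[of x] by linarith

lemma sq_pos: "sq n j > 0" unfolding sq_def using sq_arg_ge[of "2 * pi * real j / real n"]
  by (simp only: real_sqrt_gt_zero)

lemma sq_sq: "(sq n j)^2 = 4 * cos (2 * pi * real j / real n) + 5"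
  unfolding sq_def using sq_arg_ge[of "2 * pi * real j / real n"] by (simp only: real_sqrt_pow2)

lemma Re_om_pow: "Re (om n ^ j) = cos (2 * pi * real j / real n)"
  unfolding om_pow by simp

lemma key_prod: "(2 + om n ^ j) * (2 + cnj (om n ^ j)) = complex_of_real ((sq n j)^2)"
proof -
  let ?u = "om n ^ j"
  have "(2 + ?u) * (2 + cnj ?u) = 4 + 2 * (?u + cnj ?u) + cnj ?u * ?u"
    by (simp add: algebra_simps)
  also have "?u + cnj ?u = complex_of_real (2 * Re ?u)" using complex_add_cnj[of ?u] by (simp only:)
  also have "cnj ?u * ?u = 1" by (rule cnj_om_mult)
  finally show ?thesis unfolding sq_sq Re_om_pow by simp
qed

lemma cc_mult: "cc n j * (2 + cnj (om n ^ j)) = complex_of_real (sq n j)"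
proof -
  have s: "sq n j \<noteq> 0" using sq_pos[of n j] by simp
  show ?thesis unfolding cc_def using key_prod[of n j] s
    by (simp add: field_simps power2_eq_square)
qed

lemma cc_mult2: "cc n j * complex_of_real (sq n j) = 2 + om n ^ j"
proof -
  have s: "sq n j \<noteq> 0" using sq_pos[of n j] by simp
  show ?thesis unfolding cc_def using s by simp
qed

lemma cnj_cc: "cnj (cc n j) * cc n j = 1"
proof -
  have s: "sq n j \<noteq> 0" using sq_pos[of n j] by simp
  have "cnj (cc n j) * cc n j = (2 + om n ^ j) * (2 + cnj (om n ^ j)) / complex_of_real ((sq n j)^2)"
    unfolding cc_def by (simp add: power2_eq_square)
  also have "\<dots> = 1" unfolding key_prod using s by simp
  finally show ?thesis .
qed


definition sg :: "nat \<Rightarrow> nat \<Rightarrow> real" where "sg n c = (if c < n then 1 else -1)"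

definition Pm :: "nat \<Rightarrow> complex mat" where
  "Pm n = mat (2*n) (2*n) (\<lambda>(r,c). om n ^ ((c mod n) * (r div 2)) *
      (if even r then 1 else complex_of_real (sg n c) * cc n (c mod n)))"

definition Qm :: "nat \<Rightarrow> complex mat" where
  "Qm n = mat (2*n) (2*n) (\<lambda>(c,r). cnj (Pm n $$ (r,c)) / of_nat (2*n))"

definition dv :: "nat \<Rightarrow> nat \<Rightarrow> real" where "dv n i = sg n i * sq n (i mod n)"

definition Dm :: "nat \<Rightarrow> complex mat" where
  "Dm n = mat (2*n) (2*n) (\<lambda>(i,j). if i = j then complex_of_real (dv n i) else 0)"

definition Ac :: "nat \<Rightarrow> complex mat" where "Ac n = map_mat complex_of_real (F_adj n)"

lemma carriers: "Pm n \<in> carrier_mat (2*n) (2*n)" "Qm n \<in> carrier_mat (2*n) (2*n)"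
  "Dm n \<in> carrier_mat (2*n) (2*n)" "Ac n \<in> carrier_mat (2*n) (2*n)" "F_adj n \<in> carrier_mat (2*n) (2*n)"
  unfolding Pm_def Qm_def Dm_def Ac_def F_adj_def by auto

lemma P_even: "k < n \<Longrightarrow> c < 2*n \<Longrightarrow> Pm n $$ (2*k, c) = om n ^ ((c mod n) * k)"
  unfolding Pm_def by simp

lemma P_odd: "k < n \<Longrightarrow> c < 2*n \<Longrightarrow> Pm n $$ (2*k+1, c) = om n ^ ((c mod n) * k) *
      (complex_of_real (sg n c) * cc n (c mod n))"
  unfolding Pm_def by simp

lemma E_suc: assumes "k < n"
  shows "om n ^ (j * (if k = n - 1 then 0 else k + 1)) = om n ^ (j * k) * om n ^ j"
proof (cases "k = n - 1")
  case True
  have n: "n > 0" using assms by simp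
  have "om n ^ (j * k) * om n ^ j = om n ^ (j * (k + 1))" by (simp add: power_add algebra_simps)
  also have "k + 1 = n" using True n by simp
  also have "om n ^ (j * n) = 1" using om_pow_n[OF n] by (metis mult.commute power_mult power_one)
  finally show ?thesis using True by simp
next
  case False
  then show ?thesis by (simp add: power_add algebra_simps)
qed

lemma E_pred: assumes "k < n"
  shows "om n ^ (j * (if k = 0 then n - 1 else k - 1)) = om n ^ (j * k) * cnj (om n ^ j)"
proof -
  let ?kp = "if k = 0 then n - 1 else k - 1"
  have kp: "?kp < n" "(if ?kp = n - 1 then 0 else ?kp + 1) = k" using assms by auto
  have "om n ^ (j * k) = om n ^ (j * ?kp) * om n ^ j" using E_suc[OF kp(1), of j] kp(2) by simp
  then have "om n ^ (j * k) * cnj (om n ^ j) = om n ^ (j * ?kp) * (cnj (om n ^ j) * om n ^ j)"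
    by (simp add: algebra_simps)
  then show ?thesis unfolding cnj_om_mult by simp
qed


lemma AP_entry: assumes n2: "n \<ge> 2" and i: "i < 2*n" and c: "c < 2*n"
  shows "(Ac n * Pm n) $$ (i,c) = (if even i then 2 else 1) * Pm n $$ (sc n i, c)
        + (if even i then 1 else 2) * Pm n $$ (pr n i, c)"
proof -
  have "(Ac n * Pm n) $$ (i,c) = (\<Sum>r<2*n. of_real (F_adj n $$ (i,r)) * Pm n $$ (r,c))"
    using i c carriers[of n] unfolding Ac_def
    by (auto simp: scalar_prod_def lessThan_atLeast0 intro!: sum.cong)
  also note F_sum[OF n2 i]
  finally show ?thesis .
qed

lemma PD_entry: assumes i: "i < 2*n" and c: "c < 2*n"
  shows "(Pm n * Dm n) $$ (i,c) = Pm n $$ (i,c) * complex_of_real (dv n c)"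
proof -
  have "(Pm n * Dm n) $$ (i,c) = (\<Sum>r\<in>{0..<2*n}. Pm n $$ (i,r) * (if r = c then complex_of_real (dv n c) else 0))"
    using i c carriers[of n] unfolding Dm_def
    by (auto simp: scalar_prod_def intro!: sum.cong)
  also have "\<dots> = Pm n $$ (i,c) * complex_of_real (dv n c)"
    using c by (simp add: if_distrib cong: if_cong)
  finally show ?thesis .
qed

lemma eig: assumes n2: "n \<ge> 2" and i: "i < 2*n" and c: "c < 2*n"
  shows "(Ac n * Pm n) $$ (i,c) = (Pm n * Dm n) $$ (i,c)"
proof -
  define j where "j = c mod n"
  define u where "u = om n ^ j"
  define s where "s = complex_of_real (sg n c)"
  have ss: "s * s = 1" unfolding s_def sg_def by simp
  have dvc: "complex_of_real (dv n c) = s * complex_of_real (sq n j)"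
    unfolding dv_def s_def j_def by simp
  obtain k where k: "k < n" "i = 2*k \<or> i = 2*k+1" using i
  proof -
    have "i div 2 < n" using i by simp
    moreover have "i = 2*(i div 2) \<or> i = 2*(i div 2)+1" by presburger
    ultimately show ?thesis using that by blast
  qed
  show ?thesis
  proof (cases "i = 2*k")
    case True
    define kp where "kp = (if k = 0 then n - 1 else k - 1)"
    have kp: "kp < n" unfolding kp_def using k by auto
    have sci: "sc n i = 2*k+1" unfolding sc_def using True k by auto
    have pri: "pr n i = 2*kp+1" unfolding pr_def kp_def using True k n2 by auto
    have "(Ac n * Pm n) $$ (i,c) = 2 * Pm n $$ (2*k+1, c) + Pm n $$ (2*kp+1, c)"
      unfolding AP_entry[OF n2 i c] sci pri using True by simp
    also have "\<dots> = 2 * (om n ^ (j * k) * (s * cc n j)) + om n ^ (j * kp) * (s * cc n j)"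
      unfolding P_odd[OF k(1) c] P_odd[OF kp c] j_def s_def by simp
    also have "om n ^ (j * kp) = om n ^ (j * k) * cnj u"
      unfolding kp_def u_def by (rule E_pred[OF k(1)])
    also have "2 * (om n ^ (j * k) * (s * cc n j)) + om n ^ (j * k) * cnj u * (s * cc n j)
        = om n ^ (j * k) * s * (cc n j * (2 + cnj u))" by (simp add: algebra_simps)
    also have "cc n j * (2 + cnj u) = complex_of_real (sq n j)" unfolding u_def by (rule cc_mult)
    also have "om n ^ (j * k) * s * complex_of_real (sq n j) = Pm n $$ (i,c) * complex_of_real (dv n c)"
      unfolding dvc True P_even[OF k(1) c] j_def by simp
    also have "\<dots> = (Pm n * Dm n) $$ (i,c)" using PD_entry[OF i c] by simp
    finally show ?thesis .
  next
    case False
    then have i2: "i = 2*k+1" using k by simp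
    define ks where "ks = (if k = n - 1 then 0 else k + 1)"
    have ks: "ks < n" unfolding ks_def using k n2 by auto
    have sci: "sc n i = 2*ks" unfolding sc_def ks_def using i2 k by auto
    have pri: "pr n i = 2*k" unfolding pr_def using i2 by auto
    have "(Ac n * Pm n) $$ (i,c) = Pm n $$ (2*ks, c) + 2 * Pm n $$ (2*k, c)"
      unfolding AP_entry[OF n2 i c] sci pri using i2 by simp
    also have "\<dots> = om n ^ (j * ks) + 2 * om n ^ (j * k)"
      unfolding P_even[OF k(1) c] P_even[OF ks c] j_def by (simp add: mult.commute)
    also have "om n ^ (j * ks) = om n ^ (j * k) * u"
      unfolding ks_def u_def by (rule E_suc[OF k(1)])
    also have "om n ^ (j * k) * u + 2 * om n ^ (j * k) = om n ^ (j * k) * (2 + u)"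
      by (simp add: algebra_simps)
    also have "2 + u = cc n j * complex_of_real (sq n j)" unfolding u_def by (rule cc_mult2[symmetric])
    also have "om n ^ (j * k) * (cc n j * complex_of_real (sq n j))
       = om n ^ (j * k) * (s * cc n j) * (s * complex_of_real (sq n j))"
      using ss by (simp add: algebra_simps)
    also have "\<dots> = Pm n $$ (i,c) * complex_of_real (dv n c)"
      unfolding dvc i2 P_odd[OF k(1) c] j_def s_def by (simp add: mult.commute)
    also have "\<dots> = (Pm n * Dm n) $$ (i,c)" using PD_entry[OF i c] by simp
    finally show ?thesis .
  qed
qed


lemma sum_2n: "(\<Sum>r<2*(n::nat). f r) = (\<Sum>k<n. f (2*k) + f (2*k+1))"
  by (induction n) (auto simp: sum.distrib ac_simps)

lemma geo_zero: assumes "(z::complex) ^ n = 1" "z \<noteq> 1" shows "(\<Sum>k<n. z^k) = 0"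
  using assms by (simp add: sum_gp_strict)

lemma QP_entry: assumes n2: "n \<ge> 2" and c': "c' < 2*n" and c: "c < 2*n"
  shows "(Qm n * Pm n) $$ (c',c) = (if c' = c then 1 else 0)"
proof -
  define j where "j = c mod n"
  define j' where "j' = c' mod n"
  define u where "u = om n ^ j"
  define u' where "u' = om n ^ j'"
  define s where "s = complex_of_real (sg n c)"
  define s' where "s' = complex_of_real (sg n c')"
  define z where "z = cnj u' * u"
  define K where "K = (1 + cnj (s' * cc n j') * (s * cc n j)) / of_nat (2*n)"
  have n0: "n > 0" using n2 by simp
  have "(Qm n * Pm n) $$ (c',c) = (\<Sum>r<2*n. cnj (Pm n $$ (r,c')) / of_nat (2*n) * Pm n $$ (r,c))"
    using c c' carriers[of n] unfolding Qm_def
    by (auto simp: scalar_prod_def lessThan_atLeast0 intro!: sum.cong)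
  also have "\<dots> = (\<Sum>k<n. cnj (Pm n $$ (2*k,c')) / of_nat (2*n) * Pm n $$ (2*k,c)
     + cnj (Pm n $$ (2*k+1,c')) / of_nat (2*n) * Pm n $$ (2*k+1,c))" by (rule sum_2n)
  also have "\<dots> = (\<Sum>k<n. K * z ^ k)"
  proof (intro sum.cong refl)
    fix k assume "k \<in> {..<n}"
    then have k: "k < n" by simp
    have e1: "om n ^ (j * k) = u ^ k" "om n ^ (j' * k) = u' ^ k" unfolding u_def u'_def
      by (simp_all add: power_mult)
    show "cnj (Pm n $$ (2*k,c')) / of_nat (2*n) * Pm n $$ (2*k,c)
     + cnj (Pm n $$ (2*k+1,c')) / of_nat (2*n) * Pm n $$ (2*k+1,c) = K * z ^ k"
      unfolding P_even[OF k c] P_even[OF k c'] P_odd[OF k c] P_odd[OF k c']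
        j_def[symmetric] j'_def[symmetric] s_def[symmetric] s'_def[symmetric] e1
        K_def z_def power_mult_distrib complex_cnj_power complex_cnj_mult
      by (simp add: field_simps) (simp add: add_divide_distrib)
  qed
  also have "\<dots> = K * (\<Sum>k<n. z ^ k)" by (simp add: sum_distrib_left)
  finally have eq: "(Qm n * Pm n) $$ (c',c) = K * (\<Sum>k<n. z ^ k)" .
  show ?thesis
  proof (cases "j = j'")
    case True
    have z1: "z = 1" unfolding z_def u_def u'_def True using cnj_om_mult by simp
    have ccc: "cnj (cc n j') * cc n j = 1" using True cnj_cc by simp
    have "s' * s = (if c' = c then 1 else -1)"
      using True c c' unfolding s_def s'_def sg_def j_def j'_def
      by (auto simp: le_mod_geq)
    moreover have "cnj (s' * cc n j') * (s * cc n j) = s' * s * (cnj (cc n j') * cc n j)"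
      unfolding s'_def by simp
    ultimately have K: "K = (if c' = c then 2 else 0) / of_nat (2*n)"
      unfolding K_def using ccc by auto
    show ?thesis unfolding eq z1 K using n0 by simp
  next
    case False
    have ne: "c' \<noteq> c" using False unfolding j_def j'_def by auto
    have zn: "z ^ n = 1" unfolding z_def u_def u'_def power_mult_distrib complex_cnj_power[symmetric]
      power_mult[symmetric] using om_pow_n[OF n0]
      by (metis complex_cnj_one mult.commute mult_1 power_mult power_one)
    have z1: "z \<noteq> 1"
    proof
      assume "z = 1"
      then have zz: "cnj u' * u = 1" unfolding z_def by simp
      have "u = (cnj u' * u') * u" using cnj_om_mult[of n j'] unfolding u'_def by simp
      also have "\<dots> = u' * (cnj u' * u)" by (simp only: ac_simps)
      also have "\<dots> = u'" using zz by simp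
      finally have "u = u'" .
      then have "j = j'" unfolding u_def u'_def using om_inj[of j n j'] j_def j'_def n0 by simp
      then show False using False by simp
    qed
    show ?thesis unfolding eq geo_zero[OF zn z1] using ne by simp
  qed
qed


lemma prod_split: "(\<Prod>i<n+m. g i) = (\<Prod>i<n. g i) * (\<Prod>i<m. g (n+i))"
  for g :: "nat \<Rightarrow> 'a :: comm_monoid_mult"
  by (induction m) (auto simp: ac_simps)

lemma Ac_sim: assumes n2: "n \<ge> 2" shows "similar_mat (Ac n) (Dm n)"
proof -
  note C = carriers[of n]
  have QP: "Qm n * Pm n = 1\<^sub>m (2*n)"
    by (rule eq_matI) (use C QP_entry[OF n2] in auto)
  have PQ: "Pm n * Qm n = 1\<^sub>m (2*n)" by (rule mat_mult_left_right_inverse[OF C(2) C(1) QP])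
  have AP: "Ac n * Pm n = Pm n * Dm n"
    by (rule eq_matI) (use C eig[OF n2] in auto)
  have "Ac n = Ac n * (Pm n * Qm n)" using C unfolding PQ by simp
  also have "\<dots> = (Ac n * Pm n) * Qm n" using C by simp
  also have "\<dots> = Pm n * Dm n * Qm n" unfolding AP ..
  finally have "Ac n = Pm n * Dm n * Qm n" .
  then have "similar_mat_wit (Ac n) (Dm n) (Pm n) (Qm n)"
    unfolding similar_mat_wit_def Let_def using C PQ QP by auto
  then show ?thesis unfolding similar_mat_def by blast
qed

lemma char_poly_Ac: assumes n2: "n \<ge> 2"
  shows "char_poly (Ac n) = (\<Prod>j<n. [:- complex_of_real (sq n j), 1:] * [: complex_of_real (sq n j), 1:])"
proof -
  note C = carriers[of n]
  have ut: "upper_triangular (Dm n)" unfolding upper_triangular_def Dm_def by auto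
  have "char_poly (Ac n) = char_poly (Dm n)" by (rule char_poly_similar[OF Ac_sim[OF n2]])
  also have "\<dots> = (\<Prod> a \<leftarrow> diag_mat (Dm n). [:- a, 1:])" by (rule char_poly_upper_triangular[OF C(3) ut])
  also have "\<dots> = (\<Prod>i<2*n. [:- complex_of_real (dv n i), 1:])"
  proof -
    have "(\<Prod> a \<leftarrow> diag_mat (Dm n). [:- a, 1:]) = prod_list (map (\<lambda>i. [:- Dm n $$ (i,i), 1:]) [0..<2*n])"
      unfolding diag_mat_def using C by (simp add: comp_def)
    also have "\<dots> = (\<Prod>i\<in>set [0..<2*n]. [:- Dm n $$ (i,i), 1:])"
      by (rule prod.distinct_set_conv_list[symmetric]) simp
    also have "\<dots> = (\<Prod>i<2*n. [:- complex_of_real (dv n i), 1:])"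
      by (intro prod.cong) (auto simp: Dm_def)
    finally show ?thesis .
  qed
  also have "\<dots> = (\<Prod>i<n+n. [:- complex_of_real (dv n i), 1:])" by (simp add: mult_2)
  also have "\<dots> = (\<Prod>i<n. [:- complex_of_real (dv n i), 1:]) * (\<Prod>i<n. [:- complex_of_real (dv n (n+i)), 1:])"
    by (rule prod_split)
  also have "\<dots> = (\<Prod>j<n. [:- complex_of_real (sq n j), 1:] * [: complex_of_real (sq n j), 1:])"
    unfolding prod.distrib[symmetric]
    by (intro prod.cong refl) (auto simp: dv_def sg_def)
  finally show ?thesis .
qed

lemma char_poly_F: assumes n2: "n \<ge> 2"
  shows "char_poly (F_adj n) = (\<Prod>j<n. [:- sq n j, 1:] * [: sq n j, 1:])"
proof -
  interpret m: map_poly_inj_idom_hom "of_real :: real \<Rightarrow> complex" ..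
  have "map_poly of_real (char_poly (F_adj n)) = char_poly (Ac n)"
    unfolding Ac_def by (rule of_real_hom.char_poly_hom[symmetric, OF carriers(5)])
  also have "\<dots> = map_poly of_real (\<Prod>j<n. [:- sq n j, 1:] * [: sq n j, 1:])"
    unfolding char_poly_Ac[OF n2] m.hom_prod m.hom_mult by simp
  finally show ?thesis by simp
qed


lemma sq_one: assumes j: "j < n" shows "sq n j = 1 \<longleftrightarrow> 2*j = n"
proof -
  have n0: "n > 0" using j by simp
  let ?x = "2 * pi * real j / real n"
  have "sq n j = 1 \<longleftrightarrow> (sq n j)^2 = 1" using sq_pos[of n j] power2_eq_1_iff[of "sq n j"]
    by auto
  also have "\<dots> \<longleftrightarrow> cos ?x = -1" unfolding sq_sq by linarith
  also have "\<dots> \<longleftrightarrow> 2*j = n"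
  proof
    assume c: "cos ?x = -1"
    have "cos (?x - pi) = 1" using c by (simp add: cos_diff)
    then obtain m :: int where m: "?x - pi = real_of_int m * 2 * pi" unfolding cos_one_2pi_int by blast
    have "pi * (2 * real j / real n) = pi * (2 * real_of_int m + 1)" using m by (simp add: algebra_simps)
    then have "2 * real j / real n = 2 * real_of_int m + 1" by (simp only: mult_left_cancel pi_neq_zero simp_thms)
    then have e: "2 * real j = (2 * real_of_int m + 1) * real n" using n0 by (simp add: field_simps)
    then have "real_of_int (2 * int j) = real_of_int ((2 * m + 1) * int n)" by simp
    then have ei: "2 * int j = (2 * m + 1) * int n" by (simp only: of_int_eq_iff)
    have "m = 0"
    proof (rule ccontr)
      assume "m \<noteq> 0"
      then have "m \<ge> 1 \<or> m \<le> -1" by linarith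
      then show False
      proof
        assume "m \<ge> 1"
        then have "(2 * m + 1) * int n \<ge> 3 * int n" by (intro mult_right_mono) auto
        then show False using ei j by linarith
      next
        assume "m \<le> -1"
        then have "(2 * m + 1) * int n \<le> (-1) * int n" by (intro mult_right_mono) auto
        then show False using ei n0 by linarith
      qed
    qed
    then show "2*j = n" using ei by simp
  next
    assume "2*j = n"
    then have "?x = pi" using n0 by (simp add: field_simps)
    then show "cos ?x = -1" by simp
  qed
  finally show ?thesis .
qed


lemma eig1: assumes n2: "n \<ge> 2" shows "eigenvalue (F_adj n) 1 \<longleftrightarrow> even n"
proof -
  have "eigenvalue (F_adj n) 1 \<longleftrightarrow> poly (char_poly (F_adj n)) 1 = 0"
    by (rule eigenvalue_root_char_poly[OF carriers(5)])
  also have "\<dots> \<longleftrightarrow> (\<Prod>j<n. poly ([:- sq n j, 1:] * [: sq n j, 1:]) 1) = 0"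
    unfolding char_poly_F[OF n2] poly_prod ..
  also have "\<dots> \<longleftrightarrow> (\<Prod>j<n. (1 - sq n j) * (1 + sq n j)) = 0"
  proof -
    have "poly ([:- sq n j, 1:] * [: sq n j, 1:]) 1 = (1 - sq n j) * (1 + sq n j)" for j
      by (simp only: poly_mult) (simp add: algebra_simps)
    then show ?thesis by simp
  qed
  also have "\<dots> \<longleftrightarrow> (\<exists>j<n. sq n j = 1)"
  proof -
    have "(1 - sq n j) * (1 + sq n j) = 0 \<longleftrightarrow> sq n j = 1" for j
    proof -
      have "1 + sq n j \<noteq> 0" using sq_pos[of n j] by simp
      then show ?thesis by (simp only: mult_eq_0_iff) auto
    qed
    moreover have "1 + sq n j \<noteq> 0" for j using sq_pos[of n j] by simp
    ultimately show ?thesis by (simp add: prod_zero_iff) auto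
  qed
  also have "\<dots> \<longleftrightarrow> (\<exists>j<n. 2*j = n)" using sq_one by auto
  also have "\<dots> \<longleftrightarrow> even n" using n2 by (auto intro!: exI[of _ "n div 2"])
  finally show ?thesis .
qed

lemma order_jordan:
  "Polynomial.order (1::real) (\<Prod>(k,a) \<leftarrow> n_as. [:- a, 1:] ^ k) = sum_list (map fst (filter (\<lambda>(k,a). a = 1) n_as))"
proof (induction n_as)
  case Nil
  then show ?case by (simp add: order_0I)
next
  case (Cons ka n_as)
  obtain k a where ka: "ka = (k,a)" by force
  have nz1: "[:- a, 1:] ^ k \<noteq> 0" by simp
  have nz2: "(\<Prod>(k,a) \<leftarrow> n_as. [:- a, 1:] ^ k) \<noteq> (0 :: real poly)"
    by (induction n_as) auto
  have o1: "Polynomial.order 1 ([:- a, 1:] ^ k) = (if a = 1 then k else 0)"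
  proof (cases "a = 1")
    case True then show ?thesis using order_power_n_n[of 1 k] by simp
  next
    case False
    have "Polynomial.order 1 ([:- a, 1:] ^ k) = 0"
      by (rule order_0I) (simp add: poly_power False)
    then show ?thesis using False by simp
  qed
  show ?case unfolding ka using nz1 nz2 Cons.IH
    by (simp add: order_mult o1)
qed

lemma order_prod_set: "finite A \<Longrightarrow> (\<And>j. j \<in> A \<Longrightarrow> p j \<noteq> 0) \<Longrightarrow>
  Polynomial.order (x::real) (\<Prod>j\<in>A. p j) = (\<Sum>j\<in>A. Polynomial.order x (p j))"
proof (induction A rule: finite_induct)
  case empty
  then show ?case by (simp add: order_0I)
next
  case (insert a A)
  have "(\<Prod>j\<in>A. p j) \<noteq> 0" using insert by auto
  then show ?case using insert by (simp add: order_mult)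
qed

lemma order_ours: assumes n2: "n \<ge> 2" and ev: "even n"
  shows "Polynomial.order 1 (\<Prod>j<n. [:- sq n j, 1:] * [: sq n j, 1:]) = 1"
proof -
  have o: "Polynomial.order 1 ([:- sq n j, 1:] * [: sq n j, 1:]) = (if j = n div 2 then 1 else 0)" if j: "j < n" for j
  proof -
    have nz: "[:- sq n j, 1:] * [: sq n j, 1:] \<noteq> 0" by simp
    have "Polynomial.order 1 [: sq n j, 1:] = 0"
      by (rule order_0I) (use sq_pos[of n j] in simp)
    moreover have "Polynomial.order 1 [:- sq n j, 1:] = (if j = n div 2 then 1 else 0)"
    proof (cases "j = n div 2")
      case True
      then have "sq n j = 1" using sq_one[OF j] ev by auto
      then show ?thesis using order_power_n_n[of "1::real" 1] True by simp
    next
      case False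
      then have "sq n j \<noteq> 1" using sq_one[OF j] ev by auto
      then have "Polynomial.order 1 [:- sq n j, 1:] = 0" by (intro order_0I) simp
      then show ?thesis using False by simp
    qed
    ultimately show ?thesis using order_mult[OF nz] by simp
  qed
  have "Polynomial.order 1 (\<Prod>j<n. [:- sq n j, 1:] * [: sq n j, 1:]) = (\<Sum>j<n. Polynomial.order 1 ([:- sq n j, 1:] * [: sq n j, 1:]))"
    by (rule order_prod_set) auto
  also have "\<dots> = (\<Sum>j<n. if j = n div 2 then 1 else 0)" 
  proof (intro sum.cong refl)
    fix j assume "j \<in> {..<n}"
    then show "Polynomial.order 1 ([:- sq n j, 1:] * [: sq n j, 1:]) = (if j = n div 2 then 1 else 0)"
      by (intro o) simp
  qed
  also have "\<dots> = 1" using n2 by simp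
  finally show ?thesis .
qed

lemma min_list: "(\<forall>x\<in>set xs. x \<ge> (1::nat)) \<Longrightarrow> sum_list xs = 1 \<Longrightarrow> sum_list (map (min 1) xs) = 1"
proof (induction xs)
  case (Cons x xs)
  have a: "x + sum_list xs = 1" "x \<ge> 1" using Cons.prems by auto
  then have "x = 1" "sum_list xs = 0" by linarith+
  have "xs = []"
  proof (rule ccontr)
    assume "xs \<noteq> []"
    then obtain y ys where "xs = y # ys" by (cases xs) auto
    then have "y \<ge> 1" "y + sum_list ys = 0" using Cons.prems(1) \<open>sum_list xs = 0\<close> by auto
    then show False by linarith
  qed
  then show ?case using \<open>x = 1\<close> by simp
qed simp

lemma char_poly_list: "char_poly (F_adj n) = (\<Prod>j<n. [:- sq n j, 1:] * [: sq n j, 1:]) \<Longrightarrow>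
  char_poly (F_adj n) = (\<Prod>a \<leftarrow> map (sq n) [0..<n] @ map (\<lambda>j. - sq n j) [0..<n]. [:- a, 1:])"
proof -
  assume h: "char_poly (F_adj n) = (\<Prod>j<n. [:- sq n j, 1:] * [: sq n j, 1:])"
  have l: "prod_list (map f [0..<n]) = (\<Prod>j<n. f j)" for f :: "nat \<Rightarrow> real poly"
    using prod.distinct_set_conv_list[of "[0..<n]" f] by (simp add: atLeast0LessThan)
  have "(\<Prod>a \<leftarrow> map (sq n) [0..<n] @ map (\<lambda>j. - sq n j) [0..<n]. [:- a, 1:])
     = (\<Prod>j<n. [:- sq n j, 1:]) * (\<Prod>j<n. [: sq n j, 1:])"
    unfolding map_append prod_list.append map_map comp_def l minus_minus ..
  also have "\<dots> = (\<Prod>j<n. [:- sq n j, 1:] * [: sq n j, 1:])" by (rule prod.distrib[symmetric])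
  finally show ?thesis unfolding h by simp
qed

lemma kdim: assumes n2: "n \<ge> 2" and ev: "even n"
  shows "kernel_dim (char_matrix (F_adj n) 1) = 1"
proof -
  note cp = char_poly_F[OF n2]
  obtain n_as where jnf: "jordan_nf (F_adj n) n_as"
    using jordan_nf_exists[OF carriers(5) char_poly_list[OF cp]] by blast
  have cpj: "char_poly (F_adj n) = (\<Prod>(k,a) \<leftarrow> n_as. [:- a, 1:] ^ k)"
    by (rule jordan_nf_char_poly[OF jnf])
  have s1: "sum_list (map fst (filter (\<lambda>(k,a). a = 1) n_as)) = 1"
    using order_jordan[of n_as] order_ours[OF n2 ev] cp cpj by simp
  have pos: "\<forall>x\<in>set (map fst (filter (\<lambda>(k,a). a = 1) n_as)). x \<ge> 1"
    using jnf unfolding jordan_nf_def by (force simp: Suc_le_eq)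
  have "dim_gen_eigenspace (F_adj n) 1 1 = (\<Sum> k \<leftarrow> map fst [(k, e)\<leftarrow>n_as . e = 1]. min 1 k)"
    by (rule dim_gen_eigenspace[OF jnf])
  also have "\<dots> = 1" using min_list[OF pos s1] by simp
  finally have "dim_gen_eigenspace (F_adj n) 1 1 = 1" .
  moreover have "char_matrix (F_adj n) 1 ^\<^sub>m 1 = char_matrix (F_adj n) 1"
    using char_matrix_closed[OF carriers(5)] by simp
  ultimately show ?thesis unfolding dim_gen_eigenspace_def by simp
qed

theorem proposition6p1:
  fixes n :: nat
  assumes "n \<ge> 2"
  shows "char_poly (F_adj n) =
           (\<Prod>j<n. [:- sqrt (4 * cos (2 * pi * real j / real n) + 5), 1:]
                   * [:  sqrt (4 * cos (2 * pi * real j / real n) + 5), 1:])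
         \<and> (eigenvalue (F_adj n) 1 \<longleftrightarrow> even n)
         \<and> (even n \<longrightarrow> kernel_dim (char_matrix (F_adj n) 1) = 1)"
  using char_poly_F[OF assms] eig1[OF assms] kdim[OF assms] unfolding sq_def by blast

end
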